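(* Let $(S,\mathscr{S})$ be a measurable space, $n\le N$, and $X=(X_1,\ldots,X_n)$ an exchangeable random element of $S^n$. Then: (i) extending functionals exist, and every extending functional $\mathcal L$ satisfies $\mathcal L(1)=1$; (ii) if an extending functional $\mathcal L$ has $\|\mathcal L\|=1$, then $\mathcal L$ is monotone (i.e. $f\le g$ pointwise implies $\mathcal Lf\le\mathcal Lg$); (iii) if an extending functional $\mathcal L$ has $\|\mathcal L\|=1$ and $f\in b(S^N)$ satisfies $f(x)\le1$ for all $x\in S^N$, then $\mathcal L(\mathbf 1_{f\le t})\le\frac{1-\mathcal Lf}{1-t}$ for every $t<1$.
   Context: $b(S^k)$ is the space of bounded measurable real functions on $S^k$ with the sup norm. With $\mathfrak S[n,N]$ the set of injections $\{1,\ldots,n\}\to\{1,\ldots,N\}$ and $(N)_n=N(N-1)\cdots(N-n+1)$, $U^N_ng(x_1,\ldots,x_N)=\frac1{(N)_n}\sum_{\sigma\in\mathfrak S[n,N]}g(x_{\sigma(1)},\ldots,x_{\sigma(n)})$. The primitive extending functional $\mathcal E$ is the (well-defined) linear functional on $U^N_n(b(S^n))$ given by $\mathcal E(U^N_ng)=\mathbb{E}\,g(X_1,\ldots,X_n)$, with operator norm $\|\mathcal E\|$ w.r.t. the sup norm. An extending functional is a linear functional $\mathcal L:b(S^N)\to\mathbb{R}$ which is symmetric (i.e. $\mathcal L(f\circ\sigma)=\mathcal L(f)$ for every permutation $\sigma$ of coordinates), agrees with $\mathcal E$ on $U^N_n(b(S^n))$, and satisfies $\|\mathcal L\|=\|\mathcal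 E\|$. $\mathbf 1_{f\le t}$ is the indicator of $\{x:f(x)\le t\}$. *)

theory Defs
  imports "HOL-Probability.Probability" "HOL-Combinatorics.Permutations"
begin

text \<open>Points of S^k are extensional functions {..<k} \<rightarrow> S (coordinates indexed from 0).\<close>

abbreviation SPow :: "'a measure \<Rightarrow> nat \<Rightarrow> (nat \<Rightarrow> 'a) measure" where
  "SPow M k \<equiv> PiM {..<k} (\<lambda>_. M)"

definition bfun :: "'a measure \<Rightarrow> nat \<Rightarrow> ((nat \<Rightarrow> 'a) \<Rightarrow> real) set" where
  "bfun M k = {f. f \<in> borel_measurable (SPow M k) \<and>
                  (\<exists>B. \<forall>x\<in>space (SPow M k). \<bar>f x\<bar> \<le> B)}"

definition supnorm :: "'a measure \<Rightarrow> nat \<Rightarrow> ((nat \<Rightarrow> 'a) \<Rightarrow> real) \<Rightarrow> real" where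
  "supnorm M k f = (SUP x\<in>space (SPow M k). \<bar>f x\<bar>)"

text \<open>Injections {..<n} \<rightarrow> {..<N} (0-indexed version of S[n,N]).\<close>
definition injs :: "nat \<Rightarrow> nat \<Rightarrow> (nat \<Rightarrow> nat) set" where
  "injs n N = {\<sigma> \<in> {..<n} \<rightarrow>\<^sub>E {..<N}. inj_on \<sigma> {..<n}}"

definition falling :: "nat \<Rightarrow> nat \<Rightarrow> real" where
  "falling N n = (\<Prod>i<n. real (N - i))"

definition Uop :: "nat \<Rightarrow> nat \<Rightarrow> ((nat \<Rightarrow> 'a) \<Rightarrow> real) \<Rightarrow> (nat \<Rightarrow> 'a) \<Rightarrow> real" where
  "Uop n N g x = (1 / falling N n) * (\<Sum>\<sigma>\<in>injs n N. g (\<lambda>i\<in>{..<n}. x (\<sigma> i)))"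

definition exchangeable :: "'a measure \<Rightarrow> nat \<Rightarrow> 'b measure \<Rightarrow> ('b \<Rightarrow> nat \<Rightarrow> 'a) \<Rightarrow> bool" where
  "exchangeable M n P X \<longleftrightarrow>
     (\<forall>\<sigma>. \<sigma> permutes {..<n} \<longrightarrow>
        distr P (SPow M n) (\<lambda>\<omega>. X \<omega> \<circ> \<sigma>) = distr P (SPow M n) X)"

definition opnorm :: "'a measure \<Rightarrow> nat \<Rightarrow> (((nat \<Rightarrow> 'a) \<Rightarrow> real) \<Rightarrow> real) \<Rightarrow> ereal" where
  "opnorm M N L = (SUP f\<in>{f \<in> bfun M N. supnorm M N f \<le> 1}. ereal \<bar>L f\<bar>)"

text \<open>Operator norm of the primitive extending functional E, defined on U^N_n(b(S^n)) by
  E(U^N_n g) = E g(X): supremum of |E h| over h in the domain with sup norm at most 1.\<close>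
definition primnorm :: "'a measure \<Rightarrow> nat \<Rightarrow> nat \<Rightarrow> 'b measure \<Rightarrow> ('b \<Rightarrow> nat \<Rightarrow> 'a) \<Rightarrow> ereal" where
  "primnorm M n N P X =
     (SUP g\<in>{g \<in> bfun M n. supnorm M N (Uop n N g) \<le> 1}.
        ereal \<bar>integral\<^sup>L P (\<lambda>\<omega>. g (X \<omega>))\<bar>)"

definition extending ::
  "'a measure \<Rightarrow> nat \<Rightarrow> nat \<Rightarrow> 'b measure \<Rightarrow> ('b \<Rightarrow> nat \<Rightarrow> 'a) \<Rightarrow> (((nat \<Rightarrow> 'a) \<Rightarrow> real) \<Rightarrow> real) \<Rightarrow> bool" where
  "extending M n N P X L \<longleftrightarrow>
     (\<forall>f\<in>bfun M N. \<forall>g\<in>bfun M N. \<forall>a b::real.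
         L (\<lambda>x. a * f x + b * g x) = a * L f + b * L g) \<and>
     (\<forall>f\<in>bfun M N. \<forall>\<sigma>. \<sigma> permutes {..<N} \<longrightarrow> L (\<lambda>x. f (x \<circ> \<sigma>)) = L f) \<and>
     (\<forall>g\<in>bfun M n. L (Uop n N g) = integral\<^sup>L P (\<lambda>\<omega>. g (X \<omega>))) \<and>
     opnorm M N L = primnorm M n N P X"

end

theory Submission
  imports Defs
begin


lemma space_SPow: "space (SPow M k) = {..<k} \<rightarrow>\<^sub>E space M"
  by (simp add: space_PiM)

lemma space_SPow_ne: "space M \<noteq> {} \<Longrightarrow> space (SPow M k) \<noteq> {}"
  by (simp add: space_PiM PiE_eq_empty_iff)

lemma bfun_lin:
  assumes "f \<in> bfun M k" "g \<in> bfun M k"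
  shows "(\<lambda>x. a * f x + b * g x) \<in> bfun M k"
proof -
  obtain B1 where B1: "\<forall>x\<in>space (SPow M k). \<bar>f x\<bar> \<le> B1" using assms by (auto simp: bfun_def)
  obtain B2 where B2: "\<forall>x\<in>space (SPow M k). \<bar>g x\<bar> \<le> B2" using assms by (auto simp: bfun_def)
  have "\<forall>x\<in>space (SPow M k). \<bar>a * f x + b * g x\<bar> \<le> \<bar>a\<bar> * B1 + \<bar>b\<bar> * B2"
  proof
    fix x assume x: "x \<in> space (SPow M k)"
    have "\<bar>a * f x + b * g x\<bar> \<le> \<bar>a\<bar> * \<bar>f x\<bar> + \<bar>b\<bar> * \<bar>g x\<bar>"
      by (metis abs_mult abs_triangle_ineq)
    also have "\<dots> \<le> \<bar>a\<bar> * B1 + \<bar>b\<bar> * B2"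
      using B1 B2 x by (intro add_mono mult_left_mono) auto
    finally show "\<bar>a * f x + b * g x\<bar> \<le> \<bar>a\<bar> * B1 + \<bar>b\<bar> * B2" .
  qed
  moreover have "(\<lambda>x. a * f x + b * g x) \<in> borel_measurable (SPow M k)"
    using assms by (auto simp: bfun_def)
  ultimately show ?thesis unfolding bfun_def by blast
qed

lemma bfun_const: "(\<lambda>_. c) \<in> bfun M k"
  unfolding bfun_def by auto

lemma bfun_bdd: "f \<in> bfun M k \<Longrightarrow> bdd_above ((\<lambda>x. \<bar>f x\<bar>) ` space (SPow M k))"
  unfolding bfun_def bdd_above_def by auto

lemma supnorm_upper: "f \<in> bfun M k \<Longrightarrow> x \<in> space (SPow M k) \<Longrightarrow> \<bar>f x\<bar> \<le> supnorm M k f"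
  unfolding supnorm_def by (rule cSUP_upper) (auto intro: bfun_bdd)

lemma supnorm_least: "space M \<noteq> {} \<Longrightarrow> (\<And>x. x \<in> space (SPow M k) \<Longrightarrow> \<bar>f x\<bar> \<le> B) \<Longrightarrow> supnorm M k f \<le> B"
  unfolding supnorm_def by (rule cSUP_least) (auto simp: space_SPow_ne)

lemma supnorm_nonneg: "space M \<noteq> {} \<Longrightarrow> f \<in> bfun M k \<Longrightarrow> 0 \<le> supnorm M k f"
proof -
  assume "space M \<noteq> {}" "f \<in> bfun M k"
  then obtain x where "x \<in> space (SPow M k)" using space_SPow_ne[of M k] by blast
  then show ?thesis using supnorm_upper[OF \<open>f \<in> bfun M k\<close>] by (meson abs_ge_zero order_trans)
qed

lemma opnorm_le:
  assumes "opnorm M N L = ereal c" "f \<in> bfun M N" "supnorm M N f \<le> 1"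
  shows "\<bar>L f\<bar> \<le> c"
proof -
  have "ereal \<bar>L f\<bar> \<le> opnorm M N L" unfolding opnorm_def
    by (rule SUP_upper) (use assms in auto)
  then show ?thesis using assms by simp
qed

locale extL =
  fixes M :: "'a measure" and n N :: nat and P :: "'b measure" and X L
  assumes ext: "extending M n N P X L"
begin
lemma lin: "f \<in> bfun M N \<Longrightarrow> g \<in> bfun M N \<Longrightarrow> L (\<lambda>x. a * f x + b * g x) = a * L f + b * L g"
  using ext unfolding extending_def by blast
lemma agree: "g \<in> bfun M n \<Longrightarrow> L (Uop n N g) = integral\<^sup>L P (\<lambda>\<omega>. g (X \<omega>))"
  using ext unfolding extending_def by blast
end

lemma card_injs: "card (injs n N) = (\<Prod>i<n. (N - i))"
proof -
  have "card (injs n N) = card {f \<in> {..<n} \<rightarrow>\<^sub>E {..<N}. inj_on f {..<n}}"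
    by (simp add: injs_def)
  also have "\<dots> = N ^ (card {..<n} - card {..<n}) * prod ((-) N) {0..<card {..<n}}"
    using card_inj_on_subset_funcset[of "{..<n}" "{..<N}" "{..<n}"] by simp
  also have "\<dots> = (\<Prod>i<n. (N - i))" by (simp add: atLeast0LessThan)
  finally show ?thesis .
qed

lemma falling_card: "falling N n = real (card (injs n N))"
  by (simp add: falling_def card_injs)

lemma finite_injs: "finite (injs n N)"
  unfolding injs_def by (rule finite_subset[of _ "{..<n} \<rightarrow>\<^sub>E {..<N}"]) (auto intro: finite_PiE)

lemma falling_pos: "n \<le> N \<Longrightarrow> falling N n > 0"
  unfolding falling_def by (intro prod_pos) auto

lemma Uop_const: "n \<le> N \<Longrightarrow> Uop n N (\<lambda>_. c) = (\<lambda>_. c)"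
  using falling_pos[of n N] by (auto simp: Uop_def falling_card)




definition hbgood where
  "hbgood W V \<phi> p G \<longleftrightarrow> G \<subseteq> W \<times> UNIV \<and> (\<forall>f a b. (f,a)\<in>G \<longrightarrow> (f,b)\<in>G \<longrightarrow> a=b) \<and>
     (\<forall>f\<in>V. (f, \<phi> f)\<in>G) \<and>
     (\<forall>f a g b c d. (f,a)\<in>G \<longrightarrow> (g,b)\<in>G \<longrightarrow> ((\<lambda>x::'c. c*f x + d*g x), c*a+d*b) \<in> G) \<and>
     (\<forall>f a. (f,a)\<in>G \<longrightarrow> a \<le> p f)"

lemma hbgood_comb:
  assumes "hbgood W V \<phi> p G" "(f,a)\<in>G" "(g,b)\<in>G" "h = (\<lambda>x. c*f x + d*g x)" "v = c*a+d*b"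
  shows "(h,v)\<in>G"
  using assms unfolding hbgood_def by blast

lemma hbgood_fun: "hbgood W V \<phi> p G \<Longrightarrow> (f,a)\<in>G \<Longrightarrow> (f,b)\<in>G \<Longrightarrow> a=b"
  unfolding hbgood_def by blast
lemma hbgood_W: "hbgood W V \<phi> p G \<Longrightarrow> (f,a)\<in>G \<Longrightarrow> f \<in> W"
  unfolding hbgood_def by blast
lemma hbgood_V: "hbgood W V \<phi> p G \<Longrightarrow> f \<in> V \<Longrightarrow> (f, \<phi> f) \<in> G"
  unfolding hbgood_def by blast
lemma hbgood_bnd: "hbgood W V \<phi> p G \<Longrightarrow> (f,a)\<in>G \<Longrightarrow> a \<le> p f"
  unfolding hbgood_def by blast
lemma hbgood_comb':
  "hbgood W V \<phi> p G \<Longrightarrow> (f,a)\<in>G \<Longrightarrow> (g,b)\<in>G \<Longrightarrow> ((\<lambda>x. c*f x + d*g x), c*a+d*b) \<in> G"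
  unfolding hbgood_def by blast

lemma hahn_banach:
  fixes W V :: "('c \<Rightarrow> real) set" and \<phi> p :: "('c\<Rightarrow>real) \<Rightarrow> real"
  assumes W: "\<And>f g a b. f\<in>W \<Longrightarrow> g\<in>W \<Longrightarrow> (\<lambda>x. a*f x + b*g x) \<in> W"
    and V: "\<And>f g a b. f\<in>V \<Longrightarrow> g\<in>V \<Longrightarrow> (\<lambda>x. a*f x + b*g x) \<in> V"
    and VW: "V \<subseteq> W" and V0: "V \<noteq> {}"
    and \<phi>lin: "\<And>f g a b. f\<in>V \<Longrightarrow> g\<in>V \<Longrightarrow> \<phi> (\<lambda>x. a*f x + b*g x) = a*\<phi> f + b*\<phi> g"
    and sub: "\<And>f g. f\<in>W \<Longrightarrow> g\<in>W \<Longrightarrow> p (\<lambda>x. f x + g x) \<le> p f + p g"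
    and hom: "\<And>f a. f\<in>W \<Longrightarrow> a \<ge> 0 \<Longrightarrow> p (\<lambda>x. a*f x) = a*p f"
    and dom: "\<And>f. f\<in>V \<Longrightarrow> \<phi> f \<le> p f"
  shows "\<exists>L. (\<forall>f\<in>W. \<forall>g\<in>W. \<forall>a b. L (\<lambda>x. a*f x+b*g x) = a*L f + b*L g) \<and>
             (\<forall>f\<in>V. L f = \<phi> f) \<and> (\<forall>f\<in>W. L f \<le> p f)"
proof -
  let ?good = "hbgood W V \<phi> p"
  define G0 where "G0 = {(f, \<phi> f) | f. f \<in> V}"
  have G0: "?good G0" unfolding hbgood_def G0_def
  proof (intro conjI allI impI ballI)
    fix f a g b c d assume "(f,a) \<in> {(f, \<phi> f) |f. f \<in> V}" "(g,b) \<in> {(f, \<phi> f) |f. f \<in> V}"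
    then show "((\<lambda>x. c*f x + d*g x), c*a+d*b) \<in> {(f, \<phi> f) |f. f \<in> V}"
      using V \<phi>lin by auto
  qed (use VW dom in auto)
  have "\<exists>M\<in>Collect ?good. \<forall>X\<in>Collect ?good. M \<subseteq> X \<longrightarrow> X = M"
  proof (rule subset_Zorn)
    fix C assume ch: "subset.chain (Collect ?good) C"
    show "\<exists>U\<in>Collect ?good. \<forall>X\<in>C. X \<subseteq> U"
    proof (cases "C = {}")
      case True then show ?thesis using G0 by auto
    next
      case False
      then obtain G1 where G1: "G1 \<in> C" by blast
      have gd: "\<And>G. G \<in> C \<Longrightarrow> ?good G" using ch by (auto simp: subset_chain_def)
      have cmp: "\<And>G H. G \<in> C \<Longrightarrow> H \<in> C \<Longrightarrow> G \<subseteq> H \<or> H \<subseteq> G" using ch by (auto simp: subset_chain_def)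
      have "?good (\<Union>C)" unfolding hbgood_def
      proof (intro conjI allI impI ballI)
        show "\<Union> C \<subseteq> W \<times> UNIV" using gd hbgood_W by fast
      next
        fix f a b assume "(f,a) \<in> \<Union>C" "(f,b) \<in> \<Union>C"
        then obtain G H where "G\<in>C" "H\<in>C" "(f,a)\<in>G" "(f,b)\<in>H" by blast
        then show "a = b" using cmp[of G H] gd[of G] gd[of H] hbgood_fun by blast
      next
        fix f assume "f \<in> V" then show "(f, \<phi> f) \<in> \<Union>C" using G1 gd[OF G1] hbgood_V by blast
      next
        fix f a g b c d assume "(f,a) \<in> \<Union>C" "(g,b) \<in> \<Union>C"
        then obtain G H where GH: "G\<in>C" "H\<in>C" "(f,a)\<in>G" "(g,b)\<in>H" by blast
        show "((\<lambda>x. c*f x + d*g x), c*a+d*b) \<in> \<Union>C"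
        proof (cases "G \<subseteq> H")
          case True then show ?thesis using GH hbgood_comb'[OF gd[of H]] by blast
        next
          case False then have "H \<subseteq> G" using cmp GH by blast
          then show ?thesis using GH hbgood_comb'[OF gd[of G]] by blast
        qed
      next
        fix f a assume "(f,a) \<in> \<Union>C" then show "a \<le> p f" using gd hbgood_bnd by blast
      qed
      then show ?thesis by blast
    qed
  qed
  then obtain G where G: "?good G" and maxG: "\<And>H. ?good H \<Longrightarrow> G \<subseteq> H \<Longrightarrow> H = G" by blast
  note GW = hbgood_W[OF G] and fnc = hbgood_fun[OF G] and bnd = hbgood_bnd[OF G]
  obtain v0 where v0: "v0 \<in> V" using V0 by blast
  have zero: "((\<lambda>x. 0), 0) \<in> G"
    by (rule hbgood_comb[OF G, of v0 "\<phi> v0" v0 "\<phi> v0" _ 0 0]) (use hbgood_V[OF G v0] in auto)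
  have total: "\<exists>a. (w,a) \<in> G" if w: "w \<in> W" for w
  proof (rule ccontr)
    assume nw: "\<not> (\<exists>a. (w,a) \<in> G)"
    define S1 where "S1 = {b - p (\<lambda>x. g x - w x) | g b. (g,b)\<in>G}"
    define S2 where "S2 = {p (\<lambda>x. f x + w x) - a | f a. (f,a)\<in>G}"
    have S12: "s1 \<le> s2" if s1: "s1 \<in> S1" and s2: "s2 \<in> S2" for s1 s2
    proof -
      obtain g b where gb: "(g,b)\<in>G" "s1 = b - p (\<lambda>x. g x - w x)" using s1 unfolding S1_def by blast
      obtain f a where fa: "(f,a)\<in>G" "s2 = p (\<lambda>x. f x + w x) - a" using s2 unfolding S2_def by blast
      have "((\<lambda>x. f x + g x), a + b) \<in> G"
        by (rule hbgood_comb[OF G fa(1) gb(1), of _ 1 1]) auto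
      then have "a + b \<le> p (\<lambda>x. f x + g x)" by (rule bnd)
      also have "(\<lambda>x. f x + g x) = (\<lambda>x. (f x + w x) + (g x - w x))" by auto
      also have "p \<dots> \<le> p (\<lambda>x. f x + w x) + p (\<lambda>x. g x - w x)"
      proof (rule sub)
        show "(\<lambda>x. f x + w x) \<in> W" using W[OF GW[OF fa(1)] w, of 1 1] by simp
        show "(\<lambda>x. g x - w x) \<in> W" using W[OF GW[OF gb(1)] w, of 1 "-1"] by simp
      qed
      finally show ?thesis using gb fa by simp
    qed
    have S1ne: "S1 \<noteq> {}" using zero S1_def by blast
    have S2ne: "S2 \<noteq> {}" using zero S2_def by blast
    then obtain s2 where "s2 \<in> S2" by blast
    then have bdd: "bdd_above S1" using S12 by (auto simp: bdd_above_def)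
    define c0 where "c0 = Sup S1"
    have c1: "s \<le> c0" if "s \<in> S1" for s using cSup_upper[OF that bdd] c0_def by simp
    have c2: "c0 \<le> s" if "s \<in> S2" for s using cSup_least[OF S1ne] S12 that c0_def by blast
    define G' where "G' = {((\<lambda>x. f x + t * w x), a + t * c0) | f a t. (f,a)\<in>G}"
    have G'I: "(h,v) \<in> G'" if "(f,a)\<in>G" "h = (\<lambda>x. f x + t * w x)" "v = a + t * c0" for f a t h v
      unfolding G'_def using that by blast
    have G'good: "?good G'" unfolding hbgood_def
    proof (intro conjI allI impI ballI)
      show "G' \<subseteq> W \<times> UNIV"
      proof
        fix z assume "z \<in> G'"
        then obtain f a t where fa: "(f,a)\<in>G" "z = ((\<lambda>x. f x + t * w x), a + t * c0)" unfolding G'_def by blast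
        have "(\<lambda>x. 1 * f x + t * w x) \<in> W" by (rule W[OF GW[OF fa(1)] w])
        then show "z \<in> W \<times> UNIV" using fa by simp
      qed
    next
      fix h a b assume "(h,a) \<in> G'" "(h,b) \<in> G'"
      then obtain f1 a1 t1 f2 a2 t2 where 1: "(f1,a1)\<in>G" "h = (\<lambda>x. f1 x + t1 * w x)" "a = a1 + t1 * c0"
        and 2: "(f2,a2)\<in>G" "h = (\<lambda>x. f2 x + t2 * w x)" "b = a2 + t2 * c0"
        unfolding G'_def by blast
      have eq: "f1 x + t1 * w x = f2 x + t2 * w x" for x using fun_cong[OF trans[OF 1(2)[symmetric] 2(2)], of x] by simp
      show "a = b"
      proof (cases "t1 = t2")
        case True
        have "f1 = f2" using eq True by (intro ext) simp
        then have "a1 = a2" using fnc[OF 1(1)] 2(1) by simp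
        then show ?thesis using 1(3) 2(3) True by simp
      next
        case False
        have weq: "w = (\<lambda>x. (1/(t2-t1)) * f1 x + (-1/(t2-t1)) * f2 x)"
        proof
          fix x have "(t2 - t1) * w x = f1 x - f2 x" using eq[of x] by (simp add: algebra_simps)
          then have "w x = (f1 x - f2 x) / (t2 - t1)" using False by (simp add: eq_divide_eq mult.commute)
          then show "w x = (1/(t2-t1)) * f1 x + (-1/(t2-t1)) * f2 x" by (simp add: diff_divide_distrib)
        qed
        have "(w, (1/(t2-t1)) * a1 + (-1/(t2-t1)) * a2) \<in> G"
          using hbgood_comb[OF G 1(1) 2(1) weq] by simp
        then show ?thesis using nw by blast
      qed
    next
      fix f assume "f \<in> V"
      then have "(f, \<phi> f) \<in> G" using G unfolding hbgood_def by blast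
      then show "(f, \<phi> f) \<in> G'" by (rule G'I[where t=0]) auto
    next
      fix h1 a g b c d assume "(h1,a) \<in> G'" "(g,b) \<in> G'"
      then obtain f1 a1 t1 f2 a2 t2 where 1: "(f1,a1)\<in>G" "h1 = (\<lambda>x. f1 x + t1 * w x)" "a = a1 + t1 * c0"
        and 2: "(f2,a2)\<in>G" "g = (\<lambda>x. f2 x + t2 * w x)" "b = a2 + t2 * c0"
        unfolding G'_def by blast
      have "((\<lambda>x. c*f1 x + d*f2 x), c*a1+d*a2) \<in> G" using hbgood_comb[OF G 1(1) 2(1)] by blast
      moreover have "(\<lambda>x. c*h1 x + d*g x) = (\<lambda>x. (c*f1 x + d*f2 x) + (c*t1+d*t2) * w x)"
        using 1 2 by (auto simp: algebra_simps)
      moreover have "c*a+d*b = (c*a1+d*a2) + (c*t1+d*t2)*c0" using 1 2 by (simp add: algebra_simps)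
      ultimately show "((\<lambda>x. c*h1 x + d*g x), c*a+d*b) \<in> G'" by (rule G'I)
    next
      fix h a assume "(h,a) \<in> G'"
      then obtain f a1 t where 1: "(f,a1)\<in>G" "h = (\<lambda>x. f x + t * w x)" "a = a1 + t * c0"
        unfolding G'_def by blast
      have fW: "f \<in> W" using GW 1(1) .
      show "a \<le> p h"
      proof (cases "t = 0")
        case True then show ?thesis using 1 bnd by simp
      next
        case False
        show ?thesis
        proof (cases "t > 0")
          case True
          have "((\<lambda>x. f x / t), a1 / t) \<in> G" by (rule hbgood_comb[OF G 1(1) 1(1), of _ "1/t" 0]) auto
          then have "p (\<lambda>x. f x / t + w x) - a1 / t \<in> S2" unfolding S2_def
            by (intro CollectI exI[of _ "\<lambda>x. f x / t"] exI[of _ "a1/t"] conjI) auto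
          then have "c0 \<le> p (\<lambda>x. f x / t + w x) - a1 / t" by (rule c2)
          moreover have "p h = t * p (\<lambda>x. f x / t + w x)"
          proof -
            have "h = (\<lambda>x. t * (f x / t + w x))" using 1(2) True by (auto simp: field_simps)
            moreover have "(\<lambda>x. f x / t + w x) \<in> W" using W[OF fW w, of "1/t" 1] by simp
            ultimately show ?thesis using hom True by simp
          qed
          ultimately show ?thesis using 1(3) True by (simp add: field_simps)
        next
          case False
          then have tn: "t < 0" using \<open>t \<noteq> 0\<close> by simp
          define s where "s = -t"
          have sp: "s > 0" using tn s_def by simp
          have "((\<lambda>x. f x / s), a1 / s) \<in> G" by (rule hbgood_comb[OF G 1(1) 1(1), of _ "1/s" 0]) auto
          then have "a1 / s - p (\<lambda>x. f x / s - w x) \<in> S1" unfolding S1_def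
            by (intro CollectI exI[of _ "\<lambda>x. f x / s"] exI[of _ "a1/s"] conjI) auto
          then have "a1 / s - p (\<lambda>x. f x / s - w x) \<le> c0" by (rule c1)
          moreover have "p h = s * p (\<lambda>x. f x / s - w x)"
          proof -
            have "h = (\<lambda>x. s * (f x / s - w x))" using 1(2) sp s_def by (auto simp: field_simps)
            moreover have "(\<lambda>x. f x / s - w x) \<in> W" using W[OF fW w, of "1/s" "-1"] by simp
            ultimately show ?thesis using hom sp by simp
          qed
          ultimately show ?thesis using 1(3) sp s_def by (simp add: field_simps)
        qed
      qed
    qed
    have "G \<subseteq> G'"
    proof
      fix z assume "z \<in> G"
      then obtain f a where "z = (f,a)" "(f,a) \<in> G" by (cases z) auto
      then show "z \<in> G'" using G'I[where f=f and a=a and t=0] by auto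
    qed
    moreover have "(w, c0) \<in> G'" by (rule G'I[OF zero, where t=1]) auto
    ultimately show False using maxG[OF G'good] nw by blast
  qed
  define L where "L w = (THE a. (w,a) \<in> G)" for w
  have L: "(w, L w) \<in> G" if wW: "w \<in> W" for w
  proof -
    obtain a where a: "(w,a)\<in>G" using total[OF wW] by blast
    then have "L w = a" unfolding L_def using fnc by blast
    then show ?thesis using a by simp
  qed
  have Lv: "L w = a" if "(w,a)\<in>G" for w a
    using that L[OF GW[OF that]] fnc by blast
  show ?thesis
  proof (intro exI[of _ L] conjI ballI allI)
    fix f g a b assume "f \<in> W" "g \<in> W"
    then show "L (\<lambda>x. a*f x+b*g x) = a*L f + b*L g"
      by (intro Lv hbgood_comb[OF G L L]) (use \<open>f\<in>W\<close> \<open>g\<in>W\<close> in auto)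
  next
    fix f assume "f \<in> V" then show "L f = \<phi> f" using Lv G unfolding hbgood_def by blast
  next
    fix f assume "f \<in> W" then show "L f \<le> p f" using L bnd by blast
  qed
qed




lemma ext_one:
  assumes ext: "extending M n N P X L" and nN: "n \<le> N" and P: "prob_space P"
    and Xm: "X \<in> measurable P (SPow M n)"
  shows "L (\<lambda>_. 1) = 1"
proof -
  interpret extL M n N P X L by (rule extL.intro, fact)
  have "L (\<lambda>_. 1) = L (Uop n N (\<lambda>_. 1))" by (subst Uop_const[OF nN]) simp
  also have "\<dots> = integral\<^sup>L P (\<lambda>\<omega>. 1)" using agree[OF bfun_const] by simp
  also have "\<dots> = 1" using prob_space.prob_space[OF P] by simp
  finally show ?thesis .
qed

lemma ext_mono:
  assumes ext: "extending M n N P X L" and one: "L (\<lambda>_. 1) = 1" and nrm: "opnorm M N L = 1"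
    and sM: "space M \<noteq> {}"
    and f: "f \<in> bfun M N" and g: "g \<in> bfun M N" and le: "\<forall>x\<in>space (SPow M N). f x \<le> g x"
  shows "L f \<le> L g"
proof -
  interpret extL M n N P X L by (rule extL.intro, fact)
  define h where "h = (\<lambda>x. 1 * g x + (-1) * f x)"
  have h: "h \<in> bfun M N" unfolding h_def by (intro bfun_lin f g)
  have Lh: "L h = L g - L f" unfolding h_def using lin[OF g f, of 1 "-1"] by simp
  obtain B where B: "\<forall>x\<in>space (SPow M N). \<bar>h x\<bar> \<le> B" using h by (auto simp: bfun_def)
  define B' where "B' = max B 1"
  have B'pos: "B' > 0" by (simp add: B'_def)
  define u where "u = (\<lambda>x. 1 * (\<lambda>_. 1::real) x + (- 1 / B') * h x)"
  have u: "u \<in> bfun M N" unfolding u_def by (intro bfun_lin bfun_const h)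
  have Lu: "L u = 1 - L h / B'" unfolding u_def using lin[OF bfun_const[of 1] h, of 1 "-1/B'"] one by simp
  have "supnorm M N u \<le> 1"
  proof (rule supnorm_least[OF sM])
    fix x assume x: "x \<in> space (SPow M N)"
    have h0: "0 \<le> h x" using le x by (simp add: h_def)
    have hB: "h x \<le> B'" using B x by (auto simp: B'_def)
    have "0 \<le> h x / B'" "h x / B' \<le> 1" using h0 hB B'pos by auto
    then show "\<bar>u x\<bar> \<le> 1" by (simp add: u_def)
  qed
  then have "\<bar>L u\<bar> \<le> 1" using opnorm_le[of M N L 1] nrm u by simp
  then have "L h / B' \<ge> 0" using Lu by simp
  then have "L h \<ge> 0" using B'pos by (simp add: zero_le_divide_iff)
  then show ?thesis using Lh by simp
qed

lemma ext_markov: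
  assumes ext: "extending M n N P X L" and one: "L (\<lambda>_. 1) = 1" and nrm: "opnorm M N L = 1"
    and sM: "space M \<noteq> {}"
    and f: "f \<in> bfun M N" and le1: "\<forall>x\<in>space (SPow M N). f x \<le> 1" and t: "t < 1"
  shows "L (\<lambda>x. if f x \<le> t then 1 else 0) \<le> (1 - L f) / (1 - t)"
proof -
  interpret extL M n N P X L by (rule extL.intro, fact)
  define I where "I = (\<lambda>x. if f x \<le> t then 1 else (0::real))"
  have fm: "f \<in> borel_measurable (SPow M N)" using f by (simp add: bfun_def)
  have "I \<in> borel_measurable (SPow M N)" unfolding I_def using fm by measurable
  then have I: "I \<in> bfun M N" unfolding bfun_def I_def
    by (auto intro!: exI[of _ 1])
  define r where "r = (\<lambda>x. (1 / (1 - t)) * (\<lambda>_. 1::real) x + (- 1 / (1 - t)) * f x)"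
  have r: "r \<in> bfun M N" unfolding r_def by (intro bfun_lin bfun_const f)
  have Lr: "L r = (1 - L f) / (1 - t)" unfolding r_def using lin[OF bfun_const[of 1] f, of "1/(1-t)" "-1/(1-t)"] one
    by (simp add: diff_divide_distrib)
  have "\<forall>x\<in>space (SPow M N). I x \<le> r x"
  proof
    fix x assume x: "x \<in> space (SPow M N)"
    have tp: "1 - t > 0" using t by simp
    have "r x = (1 - f x) / (1 - t)" by (simp add: r_def diff_divide_distrib)
    moreover have "I x \<le> (1 - f x) / (1 - t)"
    proof (cases "f x \<le> t")
      case True then show ?thesis using tp by (simp add: I_def le_divide_eq)
    next
      case False then show ?thesis using tp le1 x by (simp add: I_def)
    qed
    ultimately show "I x \<le> r x" by simp
  qed
  then have "L I \<le> L r" by (rule ext_mono[OF ext one nrm sM I r])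
  then show ?thesis using Lr by (simp add: I_def)
qed




lemma injs_mem: "\<tau> \<in> injs n N \<Longrightarrow> i < n \<Longrightarrow> \<tau> i < N"
  unfolding injs_def by auto
lemma injs_inj: "\<tau> \<in> injs n N \<Longrightarrow> inj_on \<tau> {..<n}"
  unfolding injs_def by auto
lemma injs_ext: "\<tau> \<in> injs n N \<Longrightarrow> i \<ge> n \<Longrightarrow> \<tau> i = undefined"
  unfolding injs_def by (auto simp: PiE_def extensional_def)
lemma injsI: "(\<And>i. i < n \<Longrightarrow> \<tau> i < N) \<Longrightarrow> (\<And>i. i \<ge> n \<Longrightarrow> \<tau> i = undefined) \<Longrightarrow> inj_on \<tau> {..<n} \<Longrightarrow> \<tau> \<in> injs n N"
  unfolding injs_def by (auto simp: PiE_def extensional_def)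
lemma injs_eqI: "\<tau>1 \<in> injs n N \<Longrightarrow> \<tau>2 \<in> injs n N \<Longrightarrow> (\<And>i. i < n \<Longrightarrow> \<tau>1 i = \<tau>2 i) \<Longrightarrow> \<tau>1 = \<tau>2"
  by (metis injs_ext ext not_le)

lemma injs_nn_onto: "\<pi> \<in> injs n n \<Longrightarrow> \<pi> ` {..<n} = {..<n}"
  by (rule endo_inj_surj) (auto simp: injs_mem injs_inj)

lemma reindex_injs:
  assumes "\<And>\<tau>. \<tau> \<in> injs n N \<Longrightarrow> f \<tau> \<in> injs n N" "inj_on f (injs n N)"
  shows "(\<Sum>\<tau>\<in>injs n N. G (f \<tau>)) = (\<Sum>\<tau>\<in>injs n N. G \<tau>)"
proof -
  have "f ` injs n N = injs n N" by (rule endo_inj_surj) (use assms finite_injs in auto)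
  then show ?thesis using sum.reindex[OF assms(2), of G] by simp
qed

lemma Uop_cong: "(\<And>i. i < N \<Longrightarrow> x i = x' i) \<Longrightarrow> Uop n N g x = Uop n N g x'"
  unfolding Uop_def
  by (intro arg_cong[where f="(*) _"] sum.cong refl arg_cong[where f=g] restrict_ext) (auto simp: injs_mem)

lemma Uop_perm:
  assumes \<rho>: "\<rho> permutes {..<N}"
  shows "Uop n N g (x \<circ> \<rho>) = Uop n N g x"
proof -
  let ?f = "\<lambda>\<tau>. restrict (\<rho> \<circ> \<tau>) {..<n}"
  have 1: "?f \<tau> \<in> injs n N" if "\<tau> \<in> injs n N" for \<tau>
  proof (rule injsI)
    show "i < n \<Longrightarrow> ?f \<tau> i < N" for i using injs_mem[OF that] permutes_in_image[OF \<rho>] by auto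
    show "inj_on (?f \<tau>) {..<n}" using injs_inj[OF that] permutes_inj[OF \<rho>]
      by (auto simp: inj_on_def inj_def)
  qed auto
  have 2: "inj_on ?f (injs n N)"
  proof (rule inj_onI)
    fix \<tau>1 \<tau>2 assume a: "\<tau>1 \<in> injs n N" "\<tau>2 \<in> injs n N" "?f \<tau>1 = ?f \<tau>2"
    show "\<tau>1 = \<tau>2"
    proof (rule injs_eqI[OF a(1,2)])
      fix i assume "i < n"
      then have "\<rho> (\<tau>1 i) = \<rho> (\<tau>2 i)" using fun_cong[OF a(3), of i] by simp
      then show "\<tau>1 i = \<tau>2 i" using permutes_inj[OF \<rho>] by (auto simp: inj_def)
    qed
  qed
  have "(\<Sum>\<tau>\<in>injs n N. g (\<lambda>i\<in>{..<n}. (x \<circ> \<rho>) (\<tau> i))) = (\<Sum>\<tau>\<in>injs n N. g (\<lambda>i\<in>{..<n}. x (?f \<tau> i)))"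
    by (intro sum.cong refl arg_cong[where f=g] restrict_ext) auto
  also have "\<dots> = (\<Sum>\<tau>\<in>injs n N. g (\<lambda>i\<in>{..<n}. x (\<tau> i)))"
    by (rule reindex_injs[OF 1 2])
  finally show ?thesis unfolding Uop_def by simp
qed

lemma Uop_comp:
  "Uop n N (Uop n n g) x = Uop n N g x"
proof -
  have Fn: "falling n n = real (card (injs n n))" by (rule falling_card)
  have inner: "(\<Sum>\<tau>\<in>injs n N. g (\<lambda>i\<in>{..<n}. x (\<tau> (\<pi> i)))) = (\<Sum>\<tau>\<in>injs n N. g (\<lambda>i\<in>{..<n}. x (\<tau> i)))"
    if \<pi>: "\<pi> \<in> injs n n" for \<pi>
  proof -
    let ?f = "\<lambda>\<tau>. restrict (\<tau> \<circ> \<pi>) {..<n}"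
    have 1: "?f \<tau> \<in> injs n N" if "\<tau> \<in> injs n N" for \<tau>
    proof (rule injsI)
      show "i < n \<Longrightarrow> ?f \<tau> i < N" for i using injs_mem[OF that] injs_mem[OF \<pi>] by auto
      show "inj_on (?f \<tau>) {..<n}" using injs_inj[OF that] injs_inj[OF \<pi>] injs_mem[OF \<pi>]
        by (auto simp: inj_on_def)
    qed auto
    have 2: "inj_on ?f (injs n N)"
    proof (rule inj_onI)
      fix \<tau>1 \<tau>2 assume a: "\<tau>1 \<in> injs n N" "\<tau>2 \<in> injs n N" "?f \<tau>1 = ?f \<tau>2"
      show "\<tau>1 = \<tau>2"
      proof (rule injs_eqI[OF a(1,2)])
        fix i assume "i < n"
        then have "i \<in> \<pi> ` {..<n}" using injs_nn_onto[OF \<pi>] by simp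
        then obtain j where j: "j < n" "\<pi> j = i" by auto
        show "\<tau>1 i = \<tau>2 i" using fun_cong[OF a(3), of j] j by simp
      qed
    qed
    have "(\<Sum>\<tau>\<in>injs n N. g (\<lambda>i\<in>{..<n}. x (\<tau> (\<pi> i)))) = (\<Sum>\<tau>\<in>injs n N. g (\<lambda>i\<in>{..<n}. x (?f \<tau> i)))"
      by (intro sum.cong refl arg_cong[where f=g] restrict_ext) auto
    also have "\<dots> = (\<Sum>\<tau>\<in>injs n N. g (\<lambda>i\<in>{..<n}. x (\<tau> i)))"
      by (rule reindex_injs[OF 1 2])
    finally show ?thesis .
  qed
  have "Uop n N (Uop n n g) x = (1 / falling N n) * (\<Sum>\<tau>\<in>injs n N. (1 / falling n n) *
          (\<Sum>\<pi>\<in>injs n n. g (\<lambda>i\<in>{..<n}. x (\<tau> (\<pi> i)))))"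
    unfolding Uop_def
    by (intro arg_cong[where f="(*) _"] sum.cong refl arg_cong[where f=g] restrict_ext) (auto simp: injs_mem)
  also have "\<dots> = (1 / falling N n) * ((1 / falling n n) *
          (\<Sum>\<pi>\<in>injs n n. \<Sum>\<tau>\<in>injs n N. g (\<lambda>i\<in>{..<n}. x (\<tau> (\<pi> i)))))"
    by (simp add: sum_distrib_left[symmetric] sum.swap[of _ "injs n N"] sum_divide_distrib[symmetric])
  also have "\<dots> = (1 / falling N n) * ((1 / falling n n) *
          (\<Sum>\<pi>\<in>injs n n. \<Sum>\<tau>\<in>injs n N. g (\<lambda>i\<in>{..<n}. x (\<tau> i))))"
    using inner by simp
  also have "\<dots> = Uop n N g x"
    using falling_pos[of n n] Fn by (simp add: Uop_def)
  finally show ?thesis .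
qed

lemma Uop_bfun:
  assumes g: "g \<in> bfun M n"
  shows "Uop n N g \<in> bfun M N"
proof -
  obtain B where B: "\<forall>y\<in>space (SPow M n). \<bar>g y\<bar> \<le> B" and gm: "g \<in> borel_measurable (SPow M n)"
    using g by (auto simp: bfun_def)
  have mem: "(\<lambda>i\<in>{..<n}. x (\<tau> i)) \<in> space (SPow M n)" if "x \<in> space (SPow M N)" "\<tau> \<in> injs n N" for x \<tau>
    using that injs_mem[OF that(2)] by (auto simp: space_PiM PiE_def Pi_def)
  have meas: "(\<lambda>x. g (\<lambda>i\<in>{..<n}. x (\<tau> i))) \<in> borel_measurable (SPow M N)" if "\<tau> \<in> injs n N" for \<tau>
  proof (rule measurable_compose[OF _ gm])
    show "(\<lambda>x. \<lambda>i\<in>{..<n}. x (\<tau> i)) \<in> SPow M N \<rightarrow>\<^sub>M SPow M n"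
      by (rule measurable_restrict) (use injs_mem[OF that] in auto)
  qed
  have "Uop n N g \<in> borel_measurable (SPow M N)"
    unfolding Uop_def using meas by measurable
  moreover have "\<bar>Uop n N g x\<bar> \<le> \<bar>1 / falling N n\<bar> * (real (card (injs n N)) * B)" if x: "x \<in> space (SPow M N)" for x
  proof -
    have "\<bar>\<Sum>\<tau>\<in>injs n N. g (\<lambda>i\<in>{..<n}. x (\<tau> i))\<bar> \<le> (\<Sum>\<tau>\<in>injs n N. \<bar>g (\<lambda>i\<in>{..<n}. x (\<tau> i))\<bar>)"
      by (rule sum_abs)
    also have "\<dots> \<le> (\<Sum>\<tau>\<in>injs n N. B)" by (intro sum_mono) (use B mem x in auto)
    finally show ?thesis unfolding Uop_def abs_mult by (intro mult_left_mono) auto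
  qed
  ultimately show ?thesis unfolding bfun_def by blast
qed




lemma mset_eq_by_count:
  fixes M1 M2 :: "'a multiset"
  assumes "size M1 = size M2" "\<And>v. v \<noteq> z \<Longrightarrow> count M1 v = count M2 v"
  shows "M1 = M2"
proof -
  have f: "filter_mset (\<lambda>v. v \<noteq> z) M1 = filter_mset (\<lambda>v. v \<noteq> z) M2"
    by (rule multiset_eqI) (use assms(2) in auto)
  have s: "size M = size (filter_mset (\<lambda>v. v \<noteq> z) M) + count M z" for M :: "'a multiset"
    by (metis add.commute count_conv_size_mset multiset_partition size_union)
  have "count M1 z = count M2 z" using s[of M1] s[of M2] f assms(1) by simp
  then show ?thesis by (intro multiset_eqI) (metis assms(2))
qed

lemma core_bound:
  fixes h :: "(nat \<Rightarrow> 'a) \<Rightarrow> real"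
  assumes nN: "n \<le> N" and z: "z \<in> space M"
    and sym: "\<And>y \<pi>. y \<in> space (SPow M n) \<Longrightarrow> \<pi> permutes {..<n} \<Longrightarrow> h (y \<circ> \<pi>) = h y"
    and US: "\<And>x. x \<in> space (SPow M N) \<Longrightarrow> \<bar>Uop n N h x\<bar> \<le> S"
  shows "\<And>y. y \<in> space (SPow M n) \<Longrightarrow> \<bar>h y\<bar> \<le> (2 * real (card (injs n N)) + 1) ^ (n+1) * S"
proof -
  define F where "F = real (card (injs n N))"
  define K where "K = 2 * F + 1"
  have Fpos: "F > 0" using falling_pos[OF nN] falling_card[of N n] F_def by simp
  have K1: "K \<ge> 1" using Fpos K_def by simp
  define c where "c y = card {i\<in>{..<n}. y i = z}" for y :: "nat \<Rightarrow> 'a"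
  have cle: "c y \<le> n" for y unfolding c_def by (rule order_trans[OF card_mono[of "{..<n}"]]) auto
  define x0 where "x0 = (\<lambda>i. if i < N then z else undefined)"
  have x0: "x0 \<in> space (SPow M N)" using z by (auto simp: space_PiM x0_def PiE_def extensional_def)
  have S0: "S \<ge> 0" using US[OF x0] by linarith
  have main: "\<forall>y\<in>space (SPow M n). n - c y = d \<longrightarrow> \<bar>h y\<bar> \<le> K ^ (d+1) * S" for d
  proof (induction d rule: less_induct)
    case (less d)
    show ?case
    proof (intro ballI impI)
      fix y assume y: "y \<in> space (SPow M n)" and dy: "n - c y = d"
      have yM: "i < n \<Longrightarrow> y i \<in> space M" for i using y by (auto simp: space_PiM)
      have yU: "i \<ge> n \<Longrightarrow> y i = undefined" for i using y by (auto simp: space_PiM PiE_def extensional_def)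
      define x where "x = (\<lambda>i. if i < n then y i else if i < N then z else undefined)"
      have x: "x \<in> space (SPow M N)" using z yM nN by (auto simp: space_PiM x_def PiE_def extensional_def)
      define A where "A = {i\<in>{..<n}. y i \<noteq> z}"
      define w where "w \<tau> = (\<lambda>i\<in>{..<n}. x (\<tau> i))" for \<tau>
      define I1 where "I1 = {\<tau>\<in>injs n N. A \<subseteq> \<tau> ` {..<n}}"
      define I2 where "I2 = {\<tau>\<in>injs n N. \<not> A \<subseteq> \<tau> ` {..<n}}"
      have xA: "i < N \<Longrightarrow> x i \<noteq> z \<longleftrightarrow> i \<in> A" for i by (auto simp: x_def A_def)
      have wsp: "w \<tau> \<in> space (SPow M n)" if "\<tau> \<in> injs n N" for \<tau>
        using x injs_mem[OF that] by (auto simp: w_def space_PiM PiE_def Pi_def)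
      have cw: "c (w \<tau>) = card {i\<in>\<tau> ` {..<n}. x i = z}" if \<tau>: "\<tau> \<in> injs n N" for \<tau>
      proof -
        have "c (w \<tau>) = card {j\<in>{..<n}. x (\<tau> j) = z}" unfolding c_def w_def
          by (intro arg_cong[where f=card]) auto
        also have "\<dots> = card (\<tau> ` {j\<in>{..<n}. x (\<tau> j) = z})"
          by (rule card_image[symmetric]) (rule inj_on_subset[OF injs_inj[OF \<tau>]], auto)
        also have "\<tau> ` {j\<in>{..<n}. x (\<tau> j) = z} = {i\<in>\<tau> ` {..<n}. x i = z}" by auto
        finally show ?thesis .
      qed
      have cardT: "card (\<tau> ` {..<n}) = n" if \<tau>: "\<tau> \<in> injs n N" for \<tau>
        using card_image[OF injs_inj[OF \<tau>]] by simp
      have hI1: "h (w \<tau>) = h y" if \<tau>: "\<tau> \<in> I1" for \<tau>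
      proof -
        have \<tau>i: "\<tau> \<in> injs n N" and AT: "A \<subseteq> \<tau> ` {..<n}" using \<tau> by (auto simp: I1_def)
        have "image_mset (w \<tau>) (mset_set {..<n}) = image_mset y (mset_set {..<n})"
        proof (rule mset_eq_by_count[where z=z])
          fix v assume v: "v \<noteq> z"
          have "count (image_mset (w \<tau>) (mset_set {..<n})) v = card {j\<in>{..<n}. x (\<tau> j) = v}"
            by (simp add: count_image_mset_eq_card_vimage w_def) (metis (lifting) Collect_cong)
          also have "\<dots> = card (\<tau> ` {j\<in>{..<n}. x (\<tau> j) = v})"
            by (rule card_image[symmetric]) (rule inj_on_subset[OF injs_inj[OF \<tau>i]], auto)
          also have "\<tau> ` {j\<in>{..<n}. x (\<tau> j) = v} = {i\<in>{..<n}. y i = v}"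
          proof (intro equalityI subsetI)
            fix i assume "i \<in> \<tau> ` {j\<in>{..<n}. x (\<tau> j) = v}"
            then obtain j where j: "j < n" "i = \<tau> j" "x i = v" by auto
            have "i < N" using injs_mem[OF \<tau>i j(1)] j by simp
            then have "i \<in> A" using xA j v by auto
            then show "i \<in> {i\<in>{..<n}. y i = v}" using j by (auto simp: A_def x_def)
          next
            fix i assume i: "i \<in> {i\<in>{..<n}. y i = v}"
            then have "i \<in> A" using v by (auto simp: A_def)
            then obtain j where j: "j < n" "i = \<tau> j" using AT by auto
            then show "i \<in> \<tau> ` {j\<in>{..<n}. x (\<tau> j) = v}" using i by (auto simp: x_def)
          qed
          also have "card {i\<in>{..<n}. y i = v} = count (image_mset y (mset_set {..<n})) v"
            by (simp add: count_image_mset_eq_card_vimage)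
          finally show "count (image_mset (w \<tau>) (mset_set {..<n})) v = count (image_mset y (mset_set {..<n})) v" .
        qed simp
        then obtain p where p: "p permutes {..<n}" and pe: "\<forall>i\<in>{..<n}. w \<tau> i = y (p i)"
          by (rule image_mset_eq_implies_permutes[OF finite_lessThan])
        have "w \<tau> = y \<circ> p"
        proof
          fix i show "w \<tau> i = (y \<circ> p) i"
          proof (cases "i < n")
            case True then show ?thesis using pe by simp
          next
            case False then show ?thesis using permutes_not_in[OF p, of i] yU[of i] by (simp add: w_def)
          qed
        qed
        then show ?thesis using sym[OF y p] by simp
      qed
      have cI2: "c (w \<tau>) > c y" if \<tau>: "\<tau> \<in> I2" for \<tau>
      proof -
        have \<tau>i: "\<tau> \<in> injs n N" and AT: "\<not> A \<subseteq> \<tau> ` {..<n}" using \<tau> by (auto simp: I2_def)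
        let ?T = "\<tau> ` {..<n}"
        have TN: "?T \<subseteq> {..<N}" using injs_mem[OF \<tau>i] by auto
        have e1: "{i\<in>?T. x i = z} = ?T - (?T \<inter> A)" using xA TN by auto
        have A_n: "A \<subseteq> {..<n}" by (auto simp: A_def)
        have "c (w \<tau>) = card (?T - (?T \<inter> A))" using cw[OF \<tau>i] e1 by simp
        also have "\<dots> = n - card (?T \<inter> A)" using cardT[OF \<tau>i] by (subst card_Diff_subset) auto
        finally have 1: "c (w \<tau>) = n - card (?T \<inter> A)" .
        have "c y = card ({..<n} - A)" unfolding c_def A_def by (intro arg_cong[where f=card]) auto
        also have "\<dots> = n - card A" using A_n by (subst card_Diff_subset) (auto intro: finite_subset)
        finally have 2: "c y = n - card A" .
        have "?T \<inter> A \<subset> A" using AT by auto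
        then have "card (?T \<inter> A) < card A" using psubset_card_mono[OF finite_subset[OF A_n]] by simp
        moreover have "card A \<le> n" using card_mono[OF _ A_n] by simp
        ultimately show ?thesis using 1 2 by linarith
      qed
      have id1: "restrict id {..<n} \<in> I1"
        unfolding I1_def using nN by (auto intro!: injsI simp: inj_on_def A_def)
      have fin1: "finite I1" and fin2: "finite I2" using finite_injs by (auto simp: I1_def I2_def)
      have split: "injs n N = I1 \<union> I2" "I1 \<inter> I2 = {}" by (auto simp: I1_def I2_def)
      have k1: "card I1 \<ge> 1" using id1 fin1 by (metis One_nat_def Suc_leI card_gt_0_iff empty_iff)
      have k2: "card I2 \<le> card (injs n N)" by (intro card_mono finite_injs) (auto simp: I2_def)
      have "(\<Sum>\<tau>\<in>injs n N. h (w \<tau>)) = F * Uop n N h x"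
        using Fpos by (simp add: Uop_def w_def falling_card F_def)
      also have "(\<Sum>\<tau>\<in>injs n N. h (w \<tau>)) = (\<Sum>\<tau>\<in>I1. h (w \<tau>)) + (\<Sum>\<tau>\<in>I2. h (w \<tau>))"
        using split fin1 fin2 by (simp add: sum.union_disjoint)
      also have "(\<Sum>\<tau>\<in>I1. h (w \<tau>)) = real (card I1) * h y" using hI1 by simp
      finally have eq: "real (card I1) * h y = F * Uop n N h x - (\<Sum>\<tau>\<in>I2. h (w \<tau>))" by simp
      have b2: "\<bar>h (w \<tau>)\<bar> \<le> K ^ d * S" if \<tau>: "\<tau> \<in> I2" for \<tau>
      proof -
        have \<tau>i: "\<tau> \<in> injs n N" using \<tau> by (auto simp: I2_def)
        have lt: "n - c (w \<tau>) < d" using cI2[OF \<tau>] cle[of "w \<tau>"] dy by linarith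
        have "\<bar>h (w \<tau>)\<bar> \<le> K ^ (n - c (w \<tau>) + 1) * S" using less[OF lt] wsp[OF \<tau>i] by blast
        also have "\<dots> \<le> K ^ d * S" using lt K1 S0 by (intro mult_right_mono power_increasing) auto
        finally show ?thesis .
      qed
      have KS: "K ^ d * S \<ge> 0" using K1 S0 by simp
      have "\<bar>h y\<bar> \<le> real (card I1) * \<bar>h y\<bar>" using k1 by (simp add: mult_le_cancel_right1)
      also have "\<dots> = \<bar>real (card I1) * h y\<bar>" by (simp add: abs_mult)
      also have "\<dots> = \<bar>F * Uop n N h x - (\<Sum>\<tau>\<in>I2. h (w \<tau>))\<bar>" using eq by simp
      also have "\<dots> \<le> \<bar>F * Uop n N h x\<bar> + \<bar>\<Sum>\<tau>\<in>I2. h (w \<tau>)\<bar>" by (rule abs_triangle_ineq4)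
      also have "\<dots> \<le> F * \<bar>Uop n N h x\<bar> + (\<Sum>\<tau>\<in>I2. \<bar>h (w \<tau>)\<bar>)"
        using Fpos by (intro add_mono sum_abs) (simp add: abs_mult)
      also have "\<dots> \<le> F * S + (\<Sum>\<tau>\<in>I2. K ^ d * S)"
        using US[OF x] b2 Fpos by (intro add_mono mult_left_mono sum_mono) auto
      also have "\<dots> = F * S + real (card I2) * (K ^ d * S)" by simp
      also have "\<dots> \<le> F * (K ^ d * S) + F * (K ^ d * S)"
      proof (intro add_mono)
        have "1 * S \<le> K ^ d * S" using K1 S0 by (intro mult_right_mono) auto
        then show "F * S \<le> F * (K ^ d * S)" using Fpos by (intro mult_left_mono) auto
        show "real (card I2) * (K ^ d * S) \<le> F * (K ^ d * S)"
          using k2 KS by (intro mult_right_mono) (auto simp: F_def)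
      qed
      also have "\<dots> = (2 * F) * (K ^ d * S)" by simp
      also have "\<dots> \<le> K * (K ^ d * S)" using KS by (intro mult_right_mono) (auto simp: K_def)
      also have "\<dots> = K ^ (d+1) * S" by simp
      finally show "\<bar>h y\<bar> \<le> K ^ (d+1) * S" .
    qed
  qed
  fix y assume y: "y \<in> space (SPow M n)"
  have "\<bar>h y\<bar> \<le> K ^ (n - c y + 1) * S" using main y by blast
  also have "\<dots> \<le> K ^ (n+1) * S" using K1 S0 by (intro mult_right_mono power_increasing) auto
  finally show "\<bar>h y\<bar> \<le> (2 * real (card (injs n N)) + 1) ^ (n+1) * S" by (simp add: K_def F_def)
qed




lemma integrable_bfun:
  assumes P: "prob_space P" and Xm: "X \<in> measurable P (SPow M n)" and g: "g \<in> bfun M n"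
  shows "integrable P (\<lambda>\<omega>. g (X \<omega>))"
proof -
  interpret prob_space P by fact
  obtain B where B: "\<forall>y\<in>space (SPow M n). \<bar>g y\<bar> \<le> B" and gm: "g \<in> borel_measurable (SPow M n)"
    using g by (auto simp: bfun_def)
  show ?thesis
  proof (rule integrable_const_bound[where B=B])
    show "AE x in P. norm (g (X x)) \<le> B" using B measurable_space[OF Xm] by auto
    show "(\<lambda>\<omega>. g (X \<omega>)) \<in> borel_measurable P" using measurable_compose[OF Xm gm] .
  qed
qed

lemma injs_perm:
  assumes \<pi>: "\<pi> \<in> injs n n"
  defines "\<sigma> \<equiv> (\<lambda>i. if i < n then \<pi> i else i)"
  shows "\<sigma> permutes {..<n}" and "\<And>y. y \<in> space (SPow M n) \<Longrightarrow> (\<lambda>i\<in>{..<n}. y (\<pi> i)) = y \<circ> \<sigma>"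
proof -
  have "bij_betw \<sigma> {..<n} {..<n}"
  proof (rule bij_betw_imageI)
    show "inj_on \<sigma> {..<n}" using injs_inj[OF \<pi>] by (auto simp: inj_on_def \<sigma>_def)
    show "\<sigma> ` {..<n} = {..<n}" using injs_nn_onto[OF \<pi>] by (auto simp: \<sigma>_def image_def)
  qed
  then show "\<sigma> permutes {..<n}" by (rule bij_imp_permutes) (auto simp: \<sigma>_def)
  fix y assume "y \<in> space (SPow M n)"
  then show "(\<lambda>i\<in>{..<n}. y (\<pi> i)) = y \<circ> \<sigma>"
    by (auto simp: \<sigma>_def space_PiM PiE_def extensional_def)
qed

lemma perm_measurable:
  assumes "\<sigma> permutes {..<n}"
  shows "(\<lambda>y. y \<circ> \<sigma>) \<in> measurable (SPow M n) (SPow M n)"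
proof -
  have meas: "(\<lambda>y. \<lambda>i\<in>{..<n}. y (\<sigma> i)) \<in> measurable (SPow M n) (SPow M n)"
    by (rule measurable_restrict) (use permutes_in_image[OF assms] in auto)
  have eq: "y \<circ> \<sigma> = (\<lambda>i\<in>{..<n}. y (\<sigma> i))" if "y \<in> space (SPow M n)" for y
    using that permutes_not_in[OF assms] by (auto simp: space_PiM PiE_def extensional_def)
  show ?thesis using meas measurable_cong[of "SPow M n" "\<lambda>y. y \<circ> \<sigma>" "\<lambda>y. \<lambda>i\<in>{..<n}. y (\<sigma> i)", OF eq] by simp
qed

lemma perm_space: "\<sigma> permutes {..<n} \<Longrightarrow> y \<in> space (SPow M n) \<Longrightarrow> y \<circ> \<sigma> \<in> space (SPow M n)"
  using permutes_in_image[of \<sigma> "{..<n}"] permutes_not_in[of \<sigma> "{..<n}"]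
  by (auto simp: space_PiM PiE_def extensional_def Pi_def)

lemma exch_integral:
  assumes P: "prob_space P" and Xm: "X \<in> measurable P (SPow M n)" and ex: "exchangeable M n P X"
    and g: "g \<in> bfun M n"
  shows "integral\<^sup>L P (\<lambda>\<omega>. Uop n n g (X \<omega>)) = integral\<^sup>L P (\<lambda>\<omega>. g (X \<omega>))"
proof -
  have gm: "g \<in> borel_measurable (SPow M n)" using g by (simp add: bfun_def)
  have each: "integral\<^sup>L P (\<lambda>\<omega>. g (\<lambda>i\<in>{..<n}. X \<omega> (\<pi> i))) = integral\<^sup>L P (\<lambda>\<omega>. g (X \<omega>))"
    if \<pi>: "\<pi> \<in> injs n n" for \<pi>
  proof -
    define \<sigma> where "\<sigma> = (\<lambda>i. if i < n then \<pi> i else i)"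
    have \<sigma>: "\<sigma> permutes {..<n}" using injs_perm(1)[OF \<pi>] \<sigma>_def by simp
    have eq: "(\<lambda>i\<in>{..<n}. X \<omega> (\<pi> i)) = X \<omega> \<circ> \<sigma>" if "\<omega> \<in> space P" for \<omega>
      using injs_perm(2)[OF \<pi> measurable_space[OF Xm that]] \<sigma>_def by simp
    have m: "(\<lambda>\<omega>. X \<omega> \<circ> \<sigma>) \<in> measurable P (SPow M n)"
      using measurable_compose[OF Xm perm_measurable[OF \<sigma>]] .
    have "integral\<^sup>L P (\<lambda>\<omega>. g (\<lambda>i\<in>{..<n}. X \<omega> (\<pi> i))) = integral\<^sup>L P (\<lambda>\<omega>. g (X \<omega> \<circ> \<sigma>))"
      using eq by (intro Bochner_Integration.integral_cong) auto
    also have "\<dots> = integral\<^sup>L (distr P (SPow M n) (\<lambda>\<omega>. X \<omega> \<circ> \<sigma>)) g"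
      by (rule integral_distr[symmetric, OF m gm])
    also have "distr P (SPow M n) (\<lambda>\<omega>. X \<omega> \<circ> \<sigma>) = distr P (SPow M n) X"
    proof -
      have "\<forall>\<sigma>. \<sigma> permutes {..<n} \<longrightarrow> distr P (SPow M n) (\<lambda>\<omega>. X \<omega> \<circ> \<sigma>) = distr P (SPow M n) X"
        using ex unfolding exchangeable_def .
      then show ?thesis using \<sigma> by blast
    qed
    also have "integral\<^sup>L (distr P (SPow M n) X) g = integral\<^sup>L P (\<lambda>\<omega>. g (X \<omega>))"
      by (rule integral_distr[OF Xm gm])
    finally show ?thesis .
  qed
  have int: "integrable P (\<lambda>\<omega>. g (\<lambda>i\<in>{..<n}. X \<omega> (\<pi> i)))" if \<pi>: "\<pi> \<in> injs n n" for \<pi>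
  proof -
    have "(\<lambda>y. \<lambda>i\<in>{..<n}. y (\<pi> i)) \<in> measurable (SPow M n) (SPow M n)"
      by (rule measurable_restrict) (use injs_mem[OF \<pi>] in auto)
    from measurable_compose[OF Xm this] show ?thesis by (rule integrable_bfun[OF P _ g])
  qed
  have "integral\<^sup>L P (\<lambda>\<omega>. Uop n n g (X \<omega>)) =
      (1 / falling n n) * (\<Sum>\<pi>\<in>injs n n. integral\<^sup>L P (\<lambda>\<omega>. g (\<lambda>i\<in>{..<n}. X \<omega> (\<pi> i))))"
    unfolding Uop_def using int by (simp add: Bochner_Integration.integral_sum)
  also have "\<dots> = (1 / falling n n) * (\<Sum>\<pi>\<in>injs n n. integral\<^sup>L P (\<lambda>\<omega>. g (X \<omega>)))"
    using each by simp
  also have "\<dots> = integral\<^sup>L P (\<lambda>\<omega>. g (X \<omega>))"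
    using falling_pos[of n n] by (simp add: falling_card)
  finally show ?thesis .
qed

lemma E_bound:
  assumes nN: "n \<le> N" and sM: "space M \<noteq> {}" and P: "prob_space P"
    and Xm: "X \<in> measurable P (SPow M n)" and ex: "exchangeable M n P X"
    and g: "g \<in> bfun M n"
  shows "\<bar>integral\<^sup>L P (\<lambda>\<omega>. g (X \<omega>))\<bar> \<le> (2 * real (card (injs n N)) + 1) ^ (n+1) * supnorm M N (Uop n N g)"
proof -
  interpret prob_space P by fact
  obtain z where z: "z \<in> space M" using sM by blast
  define h where "h = Uop n n g"
  define C where "C = (2 * real (card (injs n N)) + 1) ^ (n+1)"
  define S where "S = supnorm M N (Uop n N g)"
  have hb: "h \<in> bfun M n" unfolding h_def by (rule Uop_bfun[OF g])
  have hC: "\<bar>h y\<bar> \<le> C * S" if "y \<in> space (SPow M n)" for y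
    unfolding C_def S_def
  proof (rule core_bound[OF nN z _ _ that])
    fix y \<pi> assume "y \<in> space (SPow M n)" and p: "\<pi> permutes {..<n}"
    show "h (y \<circ> \<pi>) = h y" unfolding h_def by (rule Uop_perm[OF p])
  next
    fix x assume "x \<in> space (SPow M N)"
    then show "\<bar>Uop n N h x\<bar> \<le> supnorm M N (Uop n N g)"
      unfolding h_def Uop_comp by (rule supnorm_upper[OF Uop_bfun[OF g]])
  qed
  have "integral\<^sup>L P (\<lambda>\<omega>. g (X \<omega>)) = integral\<^sup>L P (\<lambda>\<omega>. h (X \<omega>))"
    unfolding h_def by (rule exch_integral[OF P Xm ex g, symmetric])
  also have "\<bar>\<dots>\<bar> \<le> integral\<^sup>L P (\<lambda>\<omega>. \<bar>h (X \<omega>)\<bar>)" by (rule integral_abs_bound)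
  also have "\<dots> \<le> integral\<^sup>L P (\<lambda>\<omega>. C * S)"
  proof (rule integral_mono)
    show "integrable P (\<lambda>\<omega>. \<bar>h (X \<omega>)\<bar>)" using integrable_bfun[OF P Xm hb] by simp
    show "integrable P (\<lambda>\<omega>. C * S)" by simp
    show "\<And>\<omega>. \<omega> \<in> space P \<Longrightarrow> \<bar>h (X \<omega>)\<bar> \<le> C * S" using hC measurable_space[OF Xm] by blast
  qed
  also have "\<dots> = C * S" using prob_space by simp
  finally show ?thesis unfolding C_def S_def .
qed




lemma bfun_scale: "f \<in> bfun M k \<Longrightarrow> (\<lambda>x. a * f x) \<in> bfun M k"
  using bfun_lin[of f M k f a 0] by simp

lemma Uop_lin: "Uop n N (\<lambda>y. a * g1 y + b * g2 y) = (\<lambda>x. a * Uop n N g1 x + b * Uop n N g2 x)"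
  by (rule ext) (simp add: Uop_def sum.distrib sum_distrib_left algebra_simps)

lemma Uop_scale: "Uop n N (\<lambda>y. a * g y) = (\<lambda>x. a * Uop n N g x)"
  using Uop_lin[of n N a g 0 g] by simp

lemma supnorm_zero: "space M \<noteq> {} \<Longrightarrow> supnorm M k (\<lambda>_. 0) = 0"
  using supnorm_least[of M k "\<lambda>_. 0" 0] supnorm_nonneg[of M "\<lambda>_. 0" k] bfun_const by fastforce

lemma supnorm_add:
  assumes sM: "space M \<noteq> {}" and f: "f \<in> bfun M k" and g: "g \<in> bfun M k"
  shows "supnorm M k (\<lambda>x. f x + g x) \<le> supnorm M k f + supnorm M k g"
proof (rule supnorm_least[OF sM])
  fix x assume x: "x \<in> space (SPow M k)"
  have "\<bar>f x + g x\<bar> \<le> \<bar>f x\<bar> + \<bar>g x\<bar>" by (rule abs_triangle_ineq)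
  also have "\<dots> \<le> supnorm M k f + supnorm M k g" using supnorm_upper[OF f x] supnorm_upper[OF g x] by simp
  finally show "\<bar>f x + g x\<bar> \<le> supnorm M k f + supnorm M k g" .
qed

lemma supnorm_scale_le:
  assumes sM: "space M \<noteq> {}" and f: "f \<in> bfun M k"
  shows "supnorm M k (\<lambda>x. a * f x) \<le> \<bar>a\<bar> * supnorm M k f"
proof (rule supnorm_least[OF sM])
  fix x assume x: "x \<in> space (SPow M k)"
  show "\<bar>a * f x\<bar> \<le> \<bar>a\<bar> * supnorm M k f" using supnorm_upper[OF f x] by (simp add: abs_mult mult_left_mono)
qed

lemma supnorm_scale:
  assumes sM: "space M \<noteq> {}" and f: "f \<in> bfun M k" and a: "a \<ge> 0"
  shows "supnorm M k (\<lambda>x. a * f x) = a * supnorm M k f"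
proof (cases "a = 0")
  case True then show ?thesis using supnorm_zero[OF sM] by simp
next
  case False
  then have ap: "a > 0" using a by simp
  have 1: "supnorm M k (\<lambda>x. a * f x) \<le> a * supnorm M k f" using supnorm_scale_le[OF sM f, of a] a by simp
  have "supnorm M k f = supnorm M k (\<lambda>x. (1/a) * (a * f x))" using ap by simp
  also have "\<dots> \<le> (1/a) * supnorm M k (\<lambda>x. a * f x)"
    using supnorm_scale_le[OF sM bfun_scale[OF f], of "1/a" a] ap by simp
  finally have "a * supnorm M k f \<le> supnorm M k (\<lambda>x. a * f x)" using ap by (simp add: field_simps)
  then show ?thesis using 1 by simp
qed

lemma exists_ext:
  fixes M :: "'a measure" and P :: "'b measure" and X :: "'b \<Rightarrow> nat \<Rightarrow> 'a"
  assumes nN: "n \<le> N" and sM: "space M \<noteq> {}" and P: "prob_space P"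
    and Xm: "X \<in> measurable P (SPow M n)" and ex: "exchangeable M n P X"
  shows "\<exists>L. extending M n N P X L"
proof -
  interpret prob_space P by fact
  define E where "E g = integral\<^sup>L P (\<lambda>\<omega>. g (X \<omega>))" for g :: "(nat \<Rightarrow> 'a) \<Rightarrow> real"
  define C where "C = (2 * real (card (injs n N)) + 1) ^ (n+1)"
  have C0: "C \<ge> 0" by (simp add: C_def)
  have Ebd: "\<bar>E g\<bar> \<le> C * supnorm M N (Uop n N g)" if "g \<in> bfun M n" for g
    unfolding E_def C_def by (rule E_bound[OF nN sM P Xm ex that])
  have Elin: "E (\<lambda>y. a * g1 y + b * g2 y) = a * E g1 + b * E g2" if "g1 \<in> bfun M n" "g2 \<in> bfun M n" for a b g1 g2
    unfolding E_def using integrable_bfun[OF P Xm that(1)] integrable_bfun[OF P Xm that(2)] by simp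
  define PN where "PN = primnorm M n N P X"
  have PN_def': "PN = (SUP g\<in>{g \<in> bfun M n. supnorm M N (Uop n N g) \<le> 1}. ereal \<bar>E g\<bar>)"
    unfolding PN_def primnorm_def E_def ..
  have PNle: "PN \<le> ereal C" unfolding PN_def'
  proof (rule SUP_least)
    fix g assume g: "g \<in> {g \<in> bfun M n. supnorm M N (Uop n N g) \<le> 1}"
    have "\<bar>E g\<bar> \<le> C * supnorm M N (Uop n N g)" using Ebd g by simp
    also have "\<dots> \<le> C * 1" using g C0 by (intro mult_left_mono) auto
    finally show "ereal \<bar>E g\<bar> \<le> ereal C" by simp
  qed
  have zero_in: "(\<lambda>_. 0) \<in> {g \<in> bfun M n. supnorm M N (Uop n N g) \<le> 1}"
  proof -
    have "Uop n N (\<lambda>_::nat\<Rightarrow>'a. 0) = (\<lambda>_. 0::real)" by (rule Uop_const[OF nN])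
    then have "supnorm M N (Uop n N (\<lambda>_::nat\<Rightarrow>'a. 0)) = 0" using supnorm_zero[OF sM, of N] by simp
    then show ?thesis using bfun_const[of 0 M n] by simp
  qed
  have PNge: "PN \<ge> 0" unfolding PN_def' by (rule SUP_upper2[OF zero_in]) (simp add: E_def)
  define c where "c = real_of_ereal PN"
  have PNc: "PN = ereal c" using PNle PNge unfolding c_def by (cases PN) auto
  have c0: "c \<ge> 0" using PNge PNc by simp
  have HBc: "\<bar>E g\<bar> \<le> c * supnorm M N (Uop n N g)" if g: "g \<in> bfun M n" for g
  proof -
    define s where "s = supnorm M N (Uop n N g)"
    have s0: "s \<ge> 0" unfolding s_def by (rule supnorm_nonneg[OF sM Uop_bfun[OF g]])
    show ?thesis
    proof (cases "s = 0")
      case True then show ?thesis using Ebd[OF g] s_def by simp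
    next
      case False
      then have sp: "s > 0" using s0 by simp
      define g' where "g' = (\<lambda>y. (1/s) * g y)"
      have g': "g' \<in> bfun M n" unfolding g'_def by (rule bfun_scale[OF g])
      have "supnorm M N (Uop n N g') = (1/s) * s" unfolding g'_def Uop_scale s_def
        using supnorm_scale[OF sM Uop_bfun[OF g], of "1/s"] sp s_def by simp
      then have "supnorm M N (Uop n N g') \<le> 1" using sp by simp
      then have "ereal \<bar>E g'\<bar> \<le> PN" unfolding PN_def' by (intro SUP_upper) (use g' in auto)
      then have "\<bar>E g'\<bar> \<le> c" using PNc by simp
      moreover have "E g' = (1/s) * E g" unfolding g'_def E_def by simp
      ultimately have "\<bar>E g\<bar> / s \<le> c" using sp by (simp add: abs_mult)
      then show ?thesis using sp s_def by (simp add: divide_le_eq mult.commute)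
    qed
  qed
  define V where "V = {Uop n N g | g. g \<in> bfun M n}"
  define \<phi> where "\<phi> v = E (SOME g. g \<in> bfun M n \<and> v = Uop n N g)" for v
  have \<phi>U: "\<phi> (Uop n N g) = E g" if g: "g \<in> bfun M n" for g
  proof -
    define g' where "g' = (SOME g'. g' \<in> bfun M n \<and> Uop n N g = Uop n N g')"
    have "g' \<in> bfun M n \<and> Uop n N g = Uop n N g'" unfolding g'_def by (rule someI[of _ g]) (use g in simp)
    then have g': "g' \<in> bfun M n" and eq: "Uop n N g = Uop n N g'" by auto
    define d where "d = (\<lambda>y. 1 * g' y + (-1) * g y)"
    have d: "d \<in> bfun M n" unfolding d_def by (intro bfun_lin g g')
    have "Uop n N d = (\<lambda>_. 0)" unfolding d_def Uop_lin eq by simp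
    then have "\<bar>E d\<bar> \<le> 0" using HBc[OF d] supnorm_zero[OF sM] by simp
    moreover have "E d = E g' - E g" unfolding d_def using Elin[OF g' g, of 1 "-1"] by simp
    ultimately have "E g' = E g" by simp
    then show ?thesis unfolding \<phi>_def g'_def by simp
  qed
  have "\<exists>L. (\<forall>f\<in>bfun M N. \<forall>g\<in>bfun M N. \<forall>a b. L (\<lambda>x. a*f x+b*g x) = a*L f + b*L g) \<and>
             (\<forall>f\<in>V. L f = \<phi> f) \<and> (\<forall>f\<in>bfun M N. L f \<le> c * supnorm M N f)"
  proof (rule hahn_banach)
    show "\<And>f g a b. f \<in> bfun M N \<Longrightarrow> g \<in> bfun M N \<Longrightarrow> (\<lambda>x. a * f x + b * g x) \<in> bfun M N"
      by (rule bfun_lin)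
    show "\<And>f g a b. f \<in> V \<Longrightarrow> g \<in> V \<Longrightarrow> (\<lambda>x. a * f x + b * g x) \<in> V"
    proof -
      fix f g a b assume "f \<in> V" "g \<in> V"
      then obtain g1 g2 where "g1 \<in> bfun M n" "g2 \<in> bfun M n" "f = Uop n N g1" "g = Uop n N g2"
        unfolding V_def by blast
      then show "(\<lambda>x. a * f x + b * g x) \<in> V" unfolding V_def
        by (intro CollectI exI[of _ "\<lambda>y. a * g1 y + b * g2 y"]) (simp add: Uop_lin bfun_lin)
    qed
    show "V \<subseteq> bfun M N" unfolding V_def using Uop_bfun by blast
    show "V \<noteq> {}" unfolding V_def using bfun_const by blast
    show "\<And>f g a b. f \<in> V \<Longrightarrow> g \<in> V \<Longrightarrow> \<phi> (\<lambda>x. a * f x + b * g x) = a * \<phi> f + b * \<phi> g"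
    proof -
      fix f g a b assume "f \<in> V" "g \<in> V"
      then obtain g1 g2 where g12: "g1 \<in> bfun M n" "g2 \<in> bfun M n" and fg: "f = Uop n N g1" "g = Uop n N g2"
        unfolding V_def by blast
      have "(\<lambda>x. a * f x + b * g x) = Uop n N (\<lambda>y. a * g1 y + b * g2 y)" using fg by (simp add: Uop_lin)
      then show "\<phi> (\<lambda>x. a * f x + b * g x) = a * \<phi> f + b * \<phi> g"
        using \<phi>U[OF bfun_lin[OF g12]] \<phi>U[OF g12(1)] \<phi>U[OF g12(2)] Elin[OF g12] fg by simp
    qed
    show "\<And>f g. f \<in> bfun M N \<Longrightarrow> g \<in> bfun M N \<Longrightarrow> c * supnorm M N (\<lambda>x. f x + g x) \<le> c * supnorm M N f + c * supnorm M N g"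
      using supnorm_add[OF sM] c0 by (simp add: distrib_left[symmetric] mult_left_mono)
    show "\<And>f a. f \<in> bfun M N \<Longrightarrow> 0 \<le> a \<Longrightarrow> c * supnorm M N (\<lambda>x. a * f x) = a * (c * supnorm M N f)"
      using supnorm_scale[OF sM] by simp
    show "\<And>f. f \<in> V \<Longrightarrow> \<phi> f \<le> c * supnorm M N f"
    proof -
      fix f assume "f \<in> V"
      then obtain g where g: "g \<in> bfun M n" "f = Uop n N g" unfolding V_def by blast
      then show "\<phi> f \<le> c * supnorm M N f" using \<phi>U[OF g(1)] HBc[OF g(1)] by simp
    qed
  qed
  then obtain L0 where L0lin: "\<And>f g a b. f\<in>bfun M N \<Longrightarrow> g\<in>bfun M N \<Longrightarrow> L0 (\<lambda>x. a*f x+b*g x) = a*L0 f + b*L0 g"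
    and L0V: "\<And>f. f\<in>V \<Longrightarrow> L0 f = \<phi> f" and L0p: "\<And>f. f\<in>bfun M N \<Longrightarrow> L0 f \<le> c * supnorm M N f"
    by blast
  have L0abs: "\<bar>L0 f\<bar> \<le> c * supnorm M N f" if f: "f \<in> bfun M N" for f
  proof -
    have "L0 (\<lambda>x. (-1) * f x + 0 * f x) = - L0 f" using L0lin[OF f f, of "-1" 0] by simp
    moreover have "L0 (\<lambda>x. (-1) * f x + 0 * f x) \<le> c * supnorm M N (\<lambda>x. (-1) * f x + 0 * f x)"
      by (rule L0p[OF bfun_lin[OF f f]])
    moreover have "supnorm M N (\<lambda>x. (-1) * f x + 0 * f x) = supnorm M N f" by (simp add: supnorm_def)
    ultimately show ?thesis using L0p[OF f] by simp
  qed
  have L0U: "L0 (Uop n N g) = E g" if "g \<in> bfun M n" for g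
  proof -
    have "Uop n N g \<in> V" unfolding V_def using that by blast
    then show ?thesis using L0V[of "Uop n N g"] \<phi>U[OF that] by simp
  qed
  define Pm where "Pm = {\<sigma>. \<sigma> permutes {..<N}}"
  have finPm: "finite Pm" unfolding Pm_def by (rule finite_permutations) simp
  have cardPm: "real (card Pm) > 0" unfolding Pm_def using card_permutations[of "{..<N}" N] by simp
  define L where "L f = (1 / real (card Pm)) * (\<Sum>\<sigma>\<in>Pm. L0 (\<lambda>x. f (x \<circ> \<sigma>)))" for f
  have compb: "(\<lambda>x. f (x \<circ> \<sigma>)) \<in> bfun M N" if f: "f \<in> bfun M N" and \<sigma>: "\<sigma> \<in> Pm" for f \<sigma>
  proof -
    have \<sigma>p: "\<sigma> permutes {..<N}" using \<sigma> Pm_def by simp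
    obtain B where B: "\<forall>x\<in>space (SPow M N). \<bar>f x\<bar> \<le> B" and fm: "f \<in> borel_measurable (SPow M N)"
      using f by (auto simp: bfun_def)
    have "(\<lambda>x. f (x \<circ> \<sigma>)) \<in> borel_measurable (SPow M N)"
      using measurable_compose[OF perm_measurable[OF \<sigma>p] fm] .
    moreover have "\<forall>x\<in>space (SPow M N). \<bar>f (x \<circ> \<sigma>)\<bar> \<le> B" using B perm_space[OF \<sigma>p] by blast
    ultimately show ?thesis unfolding bfun_def by blast
  qed
  have compn: "supnorm M N (\<lambda>x. f (x \<circ> \<sigma>)) \<le> supnorm M N f" if f: "f \<in> bfun M N" and \<sigma>: "\<sigma> \<in> Pm" for f \<sigma>
  proof (rule supnorm_least[OF sM])
    fix x assume x: "x \<in> space (SPow M N)"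
    have \<sigma>p: "\<sigma> permutes {..<N}" using \<sigma> Pm_def by simp
    show "\<bar>f (x \<circ> \<sigma>)\<bar> \<le> supnorm M N f" by (rule supnorm_upper[OF f perm_space[OF \<sigma>p x]])
  qed
  have Llin: "L (\<lambda>x. a*f x+b*g x) = a*L f + b*L g" if f: "f\<in>bfun M N" and g: "g\<in>bfun M N" for f g a b
  proof -
    have "L (\<lambda>x. a*f x+b*g x) = (1 / real (card Pm)) * (\<Sum>\<sigma>\<in>Pm. a * L0 (\<lambda>x. f (x \<circ> \<sigma>)) + b * L0 (\<lambda>x. g (x \<circ> \<sigma>)))"
      unfolding L_def using L0lin[OF compb[OF f] compb[OF g]] by simp
    also have "\<dots> = a*L f + b*L g" unfolding L_def by (simp add: sum.distrib sum_distrib_left algebra_simps)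
    finally show ?thesis .
  qed
  have Lsym: "L (\<lambda>x. f (x \<circ> \<pi>)) = L f" if f: "f \<in> bfun M N" and \<pi>: "\<pi> permutes {..<N}" for f \<pi>
  proof -
    have "(\<Sum>\<sigma>\<in>Pm. L0 (\<lambda>x. f (x \<circ> (\<sigma> \<circ> \<pi>)))) = (\<Sum>\<sigma>\<in>Pm. L0 (\<lambda>x. f (x \<circ> \<sigma>)))"
    proof -
      have inj: "inj_on (\<lambda>\<sigma>. \<sigma> \<circ> \<pi>) Pm"
      proof (rule inj_onI)
        fix s1 s2 assume h: "s1 \<circ> \<pi> = s2 \<circ> \<pi>"
        show "s1 = s2"
        proof
          fix y have "\<pi> (inv \<pi> y) = y" using permutes_inverses(1)[OF \<pi>] .
          then show "s1 y = s2 y" using fun_cong[OF h, of "inv \<pi> y"] by simp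
        qed
      qed
      have img: "(\<lambda>\<sigma>. \<sigma> \<circ> \<pi>) ` Pm = Pm"
      proof (rule endo_inj_surj[OF finPm])
        show "(\<lambda>\<sigma>. \<sigma> \<circ> \<pi>) ` Pm \<subseteq> Pm" using permutes_compose[OF \<pi>] by (auto simp: Pm_def)
      qed (rule inj)
      show ?thesis using sum.reindex[OF inj, of "\<lambda>\<sigma>. L0 (\<lambda>x. f (x \<circ> \<sigma>))"] img by simp
    qed
    then show ?thesis unfolding L_def by (simp add: o_assoc)
  qed
  have LU: "L (Uop n N g) = E g" if g: "g \<in> bfun M n" for g
  proof -
    have "L (Uop n N g) = (1 / real (card Pm)) * (\<Sum>\<sigma>\<in>Pm. L0 (Uop n N g))"
    proof -
      have "(\<lambda>x. Uop n N g (x \<circ> \<sigma>)) = Uop n N g" if "\<sigma> \<in> Pm" for \<sigma>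
        using Uop_perm[of \<sigma> N n g] that Pm_def by auto
      then show ?thesis unfolding L_def by simp
    qed
    also have "\<dots> = E g" using cardPm L0U[OF g] by simp
    finally show ?thesis .
  qed
  have Labs: "\<bar>L f\<bar> \<le> c * supnorm M N f" if f: "f \<in> bfun M N" for f
  proof -
    have "\<bar>\<Sum>\<sigma>\<in>Pm. L0 (\<lambda>x. f (x \<circ> \<sigma>))\<bar> \<le> (\<Sum>\<sigma>\<in>Pm. \<bar>L0 (\<lambda>x. f (x \<circ> \<sigma>))\<bar>)" by (rule sum_abs)
    also have "\<dots> \<le> (\<Sum>\<sigma>\<in>Pm. c * supnorm M N f)"
    proof (rule sum_mono)
      fix \<sigma> assume \<sigma>: "\<sigma> \<in> Pm"
      have "\<bar>L0 (\<lambda>x. f (x \<circ> \<sigma>))\<bar> \<le> c * supnorm M N (\<lambda>x. f (x \<circ> \<sigma>))" by (rule L0abs[OF compb[OF f \<sigma>]])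
      also have "\<dots> \<le> c * supnorm M N f" by (intro mult_left_mono compn[OF f \<sigma>] c0)
      finally show "\<bar>L0 (\<lambda>x. f (x \<circ> \<sigma>))\<bar> \<le> c * supnorm M N f" .
    qed
    also have "\<dots> = real (card Pm) * (c * supnorm M N f)" by simp
    finally show ?thesis unfolding L_def using cardPm by (simp add: abs_mult divide_le_eq mult.commute)
  qed
  have opn: "opnorm M N L = PN"
  proof (rule antisym)
    show "opnorm M N L \<le> PN" unfolding opnorm_def PNc
    proof (rule SUP_least)
      fix f assume f: "f \<in> {f \<in> bfun M N. supnorm M N f \<le> 1}"
      have "\<bar>L f\<bar> \<le> c * supnorm M N f" using Labs f by simp
      also have "\<dots> \<le> c * 1" using f c0 by (intro mult_left_mono) auto
      finally show "ereal \<bar>L f\<bar> \<le> ereal c" by simp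
    qed
    show "PN \<le> opnorm M N L" unfolding PN_def'
    proof (rule SUP_least)
      fix g assume g: "g \<in> {g \<in> bfun M n. supnorm M N (Uop n N g) \<le> 1}"
      have "ereal \<bar>L (Uop n N g)\<bar> \<le> opnorm M N L" unfolding opnorm_def
        by (rule SUP_upper) (use g Uop_bfun in auto)
      then show "ereal \<bar>E g\<bar> \<le> opnorm M N L" using LU g by simp
    qed
  qed
  have "extending M n N P X L" unfolding extending_def
  proof (intro conjI ballI allI impI)
    show "\<And>f g a b. f \<in> bfun M N \<Longrightarrow> g \<in> bfun M N \<Longrightarrow> L (\<lambda>x. a * f x + b * g x) = a * L f + b * L g"
      by (rule Llin)
    show "\<And>f \<sigma>. f \<in> bfun M N \<Longrightarrow> \<sigma> permutes {..<N} \<Longrightarrow> L (\<lambda>x. f (x \<circ> \<sigma>)) = L f" by (rule Lsym)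
    show "\<And>g. g \<in> bfun M n \<Longrightarrow> L (Uop n N g) = integral\<^sup>L P (\<lambda>\<omega>. g (X \<omega>))" using LU E_def by simp
    show "opnorm M N L = primnorm M n N P X" using opn PN_def by simp
  qed
  then show ?thesis by blast
qed


theorem lemma9:
  fixes M :: "'a measure" and P :: "'b measure" and X :: "'b \<Rightarrow> nat \<Rightarrow> 'a"
    and n N :: nat
  assumes "n \<le> N"
    and "space M \<noteq> {}"
    and "prob_space P"
    and "X \<in> measurable P (SPow M n)"
    and "exchangeable M n P X"
  shows "((\<exists>L. extending M n N P X L) \<and>
          (\<forall>L. extending M n N P X L \<longrightarrow> L (\<lambda>_. 1) = 1)) \<and>
         (\<forall>L. extending M n N P X L \<and> opnorm M N L = 1 \<longrightarrow>
           (\<forall>f\<in>bfun M N. \<forall>g\<in>bfun M N.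
              (\<forall>x\<in>space (SPow M N). f x \<le> g x) \<longrightarrow> L f \<le> L g)) \<and>
         (\<forall>L. extending M n N P X L \<and> opnorm M N L = 1 \<longrightarrow>
           (\<forall>f\<in>bfun M N. (\<forall>x\<in>space (SPow M N). f x \<le> 1) \<longrightarrow>
              (\<forall>t::real. t < 1 \<longrightarrow>
                 L (\<lambda>x. if f x \<le> t then 1 else 0) \<le> (1 - L f) / (1 - t))))"
proof -
  have A: "\<exists>L. extending M n N P X L" by (rule exists_ext[OF assms])
  have B: "\<forall>L. extending M n N P X L \<longrightarrow> L (\<lambda>_. 1) = 1"
    using ext_one[OF _ assms(1) assms(3) assms(4)] by blast
  have Cc: "\<forall>L. extending M n N P X L \<and> opnorm M N L = 1 \<longrightarrow>
           (\<forall>f\<in>bfun M N. \<forall>g\<in>bfun M N.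
              (\<forall>x\<in>space (SPow M N). f x \<le> g x) \<longrightarrow> L f \<le> L g)"
  proof (intro allI impI ballI)
    fix L f g assume h: "extending M n N P X L \<and> opnorm M N L = 1" and f: "f \<in> bfun M N" and g: "g \<in> bfun M N"
      and le: "\<forall>x\<in>space (SPow M N). f x \<le> g x"
    have one: "L (\<lambda>_. 1) = 1" using B h by blast
    show "L f \<le> L g" by (rule ext_mono[of M n N P X L, OF _ one _ assms(2) f g le]) (use h in auto)
  qed
  have D: "\<forall>L. extending M n N P X L \<and> opnorm M N L = 1 \<longrightarrow>
           (\<forall>f\<in>bfun M N. (\<forall>x\<in>space (SPow M N). f x \<le> 1) \<longrightarrow>
              (\<forall>t::real. t < 1 \<longrightarrow>
                 L (\<lambda>x. if f x \<le> t then 1 else 0) \<le> (1 - L f) / (1 - t)))"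
  proof (intro allI impI ballI)
    fix L f t assume h: "extending M n N P X L \<and> opnorm M N L = 1" and f: "f \<in> bfun M N"
      and le: "\<forall>x\<in>space (SPow M N). f x \<le> 1" and t: "t < (1::real)"
    have one: "L (\<lambda>_. 1) = 1" using B h by blast
    show "L (\<lambda>x. if f x \<le> t then 1 else 0) \<le> (1 - L f) / (1 - t)"
      by (rule ext_markov[of M n N P X L, OF _ one _ assms(2) f le t]) (use h in auto)
  qed
  show ?thesis using A B Cc D by blast
qed

end
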